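(* Let $G=(V,E)$ be a directed graph, $s\neq t$ vertices and $k\ge 5$ an integer. For each $w\in D$ let $\widehat{In}_D(w)$ be any subset of $In_D(w)$ of size $k-2$ if $|In_D(w)|>k-2$, and $\widehat{In}_D(w)=In_D(w)$ otherwise. Let $e(u,v)$ be an undetermined edge. Then $e(u,v)$ is an edge of $SPG_k(s,t)$ if and only if there exist an integer $l$ and vertices $v_2,\dots,v_{l-2}$ forming a simple path $q^*$ in $G$ of length $l-4\le k-4$ having $e(u,v)$ as one of its edges, such that (1) $v_2\in D$ and $v_{l-2}\in A$; and (2) there exist $v_1\in \widehat{In}_D(v_2)$ and $v_{l-1}\in Out_A(v_{l-2})$ such that $s,v_1,v_2,\dots,v_{l-1},t$ are pairwise distinct.
   Context: A path from $x$ to $y$ in $G$ is a vertex sequence $x=v_0,\dots,v_m=y$ with $(v_{i-1},v_i)\in E$; its length is $m$ and $V(p)$, $E(p)$ are its vertex and edge sets. A simple path has no repeated vertex. $SPG_k(s,t)$ is the subgraph of $G$ formed by the union of vertex sets and edge sets of all simple paths from $s$ to $t$ of length at most $k$. For a vertex $u$ and integer $l\ge 0$, $EV^*_l(s,u)$ exists iff there is at least one simple path from $s$ to $u$ of length at most $l$ not containing $t$, and then $EV^*_l(s,u)$ is the intersection of $V(p)$ over all such paths. Symmetrically, $EV^*_l(v,t)$ exists iff there is at least one simple path from $v$ to $t$ of length at most $l$ not containing $s$, and then it is the intersection of $V(p)$ over all such paths. The upper-bound graph $SPG^u_k(s,t)$ is the subgraph of $G$ whose edges are exactly those $e(u,v)\in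 E$ for which there exist integers $k_f,k_b\ge 0$ with $EV^*_{k_f}(s,u)$ and $EV^*_{k_b}(v,t)$ existing, $k_f+1+k_b\le k$, and $EV^*_{k_f}(s,u)\cap EV^*_{k_b}(v,t)=\emptyset$. An edge $e(u,v)\in E$ is definite if one of: (a) $u=s$ and $EV^*_{k-1}(v,t)$ exists; (b) $v=t$ and $EV^*_{k-1}(s,u)$ exists; (c) $EV^*_1(s,u)$ and $EV^*_{k-2}(v,t)$ exist and $u\notin EV^*_{k-2}(v,t)$; (d) $EV^*_1(v,t)$ and $EV^*_{k-2}(s,u)$ exist and $v\notin EV^*_{k-2}(s,u)$. An undetermined edge is an edge of $SPG^u_k(s,t)$ that is not definite. The departure set $D$ consists of vertices $w$ having an in-neighbour $x$ such that $x,w,s,t$ are pairwise distinct and $e(s,x),e(x,w)$ are edges of $SPG^u_k(s,t)$; for $w\in D$, $In_D(w)$ is the set of all such $x$. The arrival set $A$ consists of vertices $w$ having an out-neighbour $y$ such that $w,y,s,t$ are pairwise distinct and $e(w,y),e(y,t)$ are edges of $SPG^u_k(s,t)$; for $w\in A$, $Out_A(w)$ is the set of all such $y$. *)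

theory Defs
  imports Main
begin

definition is_path :: "('a \<times> 'a) set \<Rightarrow> 'a list \<Rightarrow> bool" where
  "is_path E p \<longleftrightarrow> p \<noteq> [] \<and> (\<forall>i. Suc i < length p \<longrightarrow> (p ! i, p ! Suc i) \<in> E)"

definition path_edges :: "'a list \<Rightarrow> ('a \<times> 'a) set" where
  "path_edges p = set (zip p (tl p))"

definition plen :: "'a list \<Rightarrow> nat" where
  "plen p = length p - 1"

definition simple_path :: "('a \<times> 'a) set \<Rightarrow> 'a \<Rightarrow> 'a \<Rightarrow> 'a list \<Rightarrow> bool" where
  "simple_path E x y p \<longleftrightarrow> is_path E p \<and> hd p = x \<and> last p = y \<and> distinct p"

definition SPG_edges :: "('a \<times> 'a) set \<Rightarrow> nat \<Rightarrow> 'a \<Rightarrow> 'a \<Rightarrow> ('a \<times> 'a) set" where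
  "SPG_edges E k s t = \<Union> {path_edges p | p. simple_path E s t p \<and> plen p \<le> k}"

text \<open>EV*_l(s,u): existence and value (forward, paths avoiding t).\<close>
definition EVf_ex :: "('a \<times> 'a) set \<Rightarrow> 'a \<Rightarrow> 'a \<Rightarrow> nat \<Rightarrow> 'a \<Rightarrow> bool" where
  "EVf_ex E s t l u \<longleftrightarrow> (\<exists>p. simple_path E s u p \<and> plen p \<le> l \<and> t \<notin> set p)"

definition EVf :: "('a \<times> 'a) set \<Rightarrow> 'a \<Rightarrow> 'a \<Rightarrow> nat \<Rightarrow> 'a \<Rightarrow> 'a set" where
  "EVf E s t l u = \<Inter> {set p | p. simple_path E s u p \<and> plen p \<le> l \<and> t \<notin> set p}"

text \<open>EV*_l(v,t): existence and value (backward, paths avoiding s).\<close>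
definition EVb_ex :: "('a \<times> 'a) set \<Rightarrow> 'a \<Rightarrow> 'a \<Rightarrow> nat \<Rightarrow> 'a \<Rightarrow> bool" where
  "EVb_ex E s t l v \<longleftrightarrow> (\<exists>p. simple_path E v t p \<and> plen p \<le> l \<and> s \<notin> set p)"

definition EVb :: "('a \<times> 'a) set \<Rightarrow> 'a \<Rightarrow> 'a \<Rightarrow> nat \<Rightarrow> 'a \<Rightarrow> 'a set" where
  "EVb E s t l v = \<Inter> {set p | p. simple_path E v t p \<and> plen p \<le> l \<and> s \<notin> set p}"

definition SPGu_edges :: "('a \<times> 'a) set \<Rightarrow> nat \<Rightarrow> 'a \<Rightarrow> 'a \<Rightarrow> ('a \<times> 'a) set" where
  "SPGu_edges E k s t = {(u, v). (u, v) \<in> E \<and>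
     (\<exists>kf kb. EVf_ex E s t kf u \<and> EVb_ex E s t kb v \<and> kf + 1 + kb \<le> k \<and>
              EVf E s t kf u \<inter> EVb E s t kb v = {})}"

definition definite_edge :: "('a \<times> 'a) set \<Rightarrow> nat \<Rightarrow> 'a \<Rightarrow> 'a \<Rightarrow> 'a \<Rightarrow> 'a \<Rightarrow> bool" where
  "definite_edge E k s t u v \<longleftrightarrow> (u, v) \<in> E \<and>
     ((u = s \<and> EVb_ex E s t (k - 1) v)
    \<or> (v = t \<and> EVf_ex E s t (k - 1) u)
    \<or> (EVf_ex E s t 1 u \<and> EVb_ex E s t (k - 2) v \<and> u \<notin> EVb E s t (k - 2) v)
    \<or> (EVb_ex E s t 1 v \<and> EVf_ex E s t (k - 2) u \<and> v \<notin> EVf E s t (k - 2) u))"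

definition undetermined_edge :: "('a \<times> 'a) set \<Rightarrow> nat \<Rightarrow> 'a \<Rightarrow> 'a \<Rightarrow> 'a \<Rightarrow> 'a \<Rightarrow> bool" where
  "undetermined_edge E k s t u v \<longleftrightarrow> (u, v) \<in> SPGu_edges E k s t \<and> \<not> definite_edge E k s t u v"

definition In_D :: "('a \<times> 'a) set \<Rightarrow> nat \<Rightarrow> 'a \<Rightarrow> 'a \<Rightarrow> 'a \<Rightarrow> 'a set" where
  "In_D E k s t w = {x. (x, w) \<in> E \<and> distinct [x, w, s, t] \<and>
      (s, x) \<in> SPGu_edges E k s t \<and> (x, w) \<in> SPGu_edges E k s t}"

definition Dep :: "('a \<times> 'a) set \<Rightarrow> nat \<Rightarrow> 'a \<Rightarrow> 'a \<Rightarrow> 'a set" where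
  "Dep E k s t = {w. In_D E k s t w \<noteq> {}}"

definition Out_A :: "('a \<times> 'a) set \<Rightarrow> nat \<Rightarrow> 'a \<Rightarrow> 'a \<Rightarrow> 'a \<Rightarrow> 'a set" where
  "Out_A E k s t w = {y. (w, y) \<in> E \<and> distinct [w, y, s, t] \<and>
      (w, y) \<in> SPGu_edges E k s t \<and> (y, t) \<in> SPGu_edges E k s t}"

definition Arr :: "('a \<times> 'a) set \<Rightarrow> nat \<Rightarrow> 'a \<Rightarrow> 'a \<Rightarrow> 'a set" where
  "Arr E k s t = {w. Out_A E k s t w \<noteq> {}}"

end

theory Submission
  imports Defs
begin

lemma is_path_Cons2: "is_path E (x # y # r) \<longleftrightarrow> (x, y) \<in> E \<and> is_path E (y # r)"
  unfolding is_path_def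
  by (auto simp: nth_Cons split: nat.splits)

lemma is_path_single[simp]: "is_path E [x]"
  by (simp add: is_path_def)

lemma is_path_append:
  "xs \<noteq> [] \<Longrightarrow> ys \<noteq> [] \<Longrightarrow>
   is_path E (xs @ ys) \<longleftrightarrow> is_path E xs \<and> is_path E ys \<and> (last xs, hd ys) \<in> E"
proof (induction xs)
  case Nil then show ?case by simp
next
  case (Cons x xs)
  show ?case
  proof (cases xs)
    case Nil
    then show ?thesis using Cons.prems
      by (cases ys) (auto simp: is_path_Cons2)
  next
    case (Cons y r)
    then show ?thesis using Cons.IH Cons.prems
      by (auto simp: is_path_Cons2)
  qed
qed

lemma path_edges_Nil[simp]: "path_edges [] = {}"
  by (simp add: path_edges_def)
lemma path_edges_single[simp]: "path_edges [x] = {}"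
  by (simp add: path_edges_def)
lemma path_edges_Cons2: "path_edges (x # y # r) = insert (x, y) (path_edges (y # r))"
  by (simp add: path_edges_def)

lemma path_edges_append:
  "xs \<noteq> [] \<Longrightarrow> ys \<noteq> [] \<Longrightarrow>
   path_edges (xs @ ys) = insert (last xs, hd ys) (path_edges xs \<union> path_edges ys)"
proof (induction xs)
  case Nil then show ?case by simp
next
  case (Cons x xs)
  show ?case
  proof (cases xs)
    case Nil
    then show ?thesis using Cons.prems
      by (cases ys) (auto simp: path_edges_Cons2)
  next
    case (Cons y r)
    then show ?thesis using Cons.IH Cons.prems
      by (auto simp: path_edges_Cons2)
  qed
qed

lemma path_edges_split:
  "(u, v) \<in> path_edges p \<Longrightarrow> \<exists>pre post. p = pre @ post \<and> pre \<noteq> [] \<and> post \<noteq> [] \<and> last pre = u \<and> hd post = v"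
proof (induction p)
  case Nil then show ?case by simp
next
  case (Cons x xs)
  show ?case
  proof (cases xs)
    case Nil then show ?thesis using Cons.prems by simp
  next
    case (Cons y r)
    show ?thesis
    proof (cases "(u, v) = (x, y)")
      case True then show ?thesis using Cons by (intro exI[of _ "[x]"] exI[of _ xs]) auto
    next
      case False
      then have "(u, v) \<in> path_edges xs" using Cons Cons.prems by (auto simp add: path_edges_Cons2)
      then obtain pre post where "xs = pre @ post" "pre \<noteq> []" "post \<noteq> []" "last pre = u" "hd post = v"
        using Cons.IH by blast
      then show ?thesis by (intro exI[of _ "x # pre"] exI[of _ post]) auto
    qed
  qed
qed

lemma EVf_lemma:
  assumes "simple_path E s u p" "plen p \<le> l" "t \<notin> set p"
  shows "EVf_ex E s t l u" "EVf E s t l u \<subseteq> set p"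
  using assms unfolding EVf_ex_def EVf_def by blast+

lemma EVb_lemma:
  assumes "simple_path E v t p" "plen p \<le> l" "s \<notin> set p"
  shows "EVb_ex E s t l v" "EVb E s t l v \<subseteq> set p"
  using assms unfolding EVb_ex_def EVb_def by blast+

lemma spgu_split:
  assumes sp: "simple_path E s t (pre @ post)" and ne: "pre \<noteq> []" "post \<noteq> []"
    and len: "plen (pre @ post) \<le> k"
  shows "(last pre, hd post) \<in> SPGu_edges E k s t"
proof -
  from sp ne have ip: "is_path E pre" "is_path E post" "(last pre, hd post) \<in> E"
    and h: "hd pre = s" "last post = t" and d: "distinct pre" "distinct post" "set pre \<inter> set post = {}"
    by (auto simp: simple_path_def is_path_append)
  have tn: "t \<notin> set pre" using h d ne by (metis disjoint_iff last_in_set)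
  have sn: "s \<notin> set post" using h d ne by (metis disjoint_iff hd_in_set)
  have f: "simple_path E s (last pre) pre" using ip h d by (simp add: simple_path_def)
  have b: "simple_path E (hd post) t post" using ip h d by (simp add: simple_path_def)
  note F = EVf_lemma[OF f order_refl tn]
  note B = EVb_lemma[OF b order_refl sn]
  have "plen pre + 1 + plen post \<le> k" using len ne by (cases pre; cases post) (auto simp add: plen_def)
  then show ?thesis unfolding SPGu_edges_def using F B ip d by blast
qed


theorem theorem5p8:
  fixes E :: "('a \<times> 'a) set" and s t u v :: 'a and k :: nat
    and InHat :: "'a \<Rightarrow> 'a set"
  assumes "finite E"
    and "s \<noteq> t"
    and "k \<ge> 5"
    and "\<And>w. w \<in> Dep E k s t \<Longrightarrow> InHat w \<subseteq> In_D E k s t w \<and>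
            (if card (In_D E k s t w) > k - 2 then card (InHat w) = k - 2
             else InHat w = In_D E k s t w)"
    and "undetermined_edge E k s t u v"
  shows "(u, v) \<in> SPG_edges E k s t \<longleftrightarrow>
    (\<exists>l q. 4 \<le> l \<and> length q + 3 = l \<and> l - 4 \<le> k - 4 \<and>
       is_path E q \<and> distinct q \<and> (u, v) \<in> path_edges q \<and>
       hd q \<in> Dep E k s t \<and> last q \<in> Arr E k s t \<and>
       (\<exists>v1 \<in> InHat (hd q). \<exists>vl1 \<in> Out_A E k s t (last q).
          distinct ([s, v1] @ q @ [vl1, t])))"
proof
  assume "\<exists>l q. 4 \<le> l \<and> length q + 3 = l \<and> l - 4 \<le> k - 4 \<and>
       is_path E q \<and> distinct q \<and> (u, v) \<in> path_edges q \<and>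
       hd q \<in> Dep E k s t \<and> last q \<in> Arr E k s t \<and>
       (\<exists>v1 \<in> InHat (hd q). \<exists>vl1 \<in> Out_A E k s t (last q).
          distinct ([s, v1] @ q @ [vl1, t]))"
  then obtain l q v1 vl1 where l: "4 \<le> l" "length q + 3 = l" "l - 4 \<le> k - 4"
    and q: "is_path E q" "distinct q" "(u, v) \<in> path_edges q" "hd q \<in> Dep E k s t"
    and v1: "v1 \<in> InHat (hd q)" and vl1: "vl1 \<in> Out_A E k s t (last q)"
    and d: "distinct ([s, v1] @ q @ [vl1, t])" by blast
  have qne: "q \<noteq> []" using q(3) by auto
  have "v1 \<in> In_D E k s t (hd q)" using assms(4)[OF q(4)] v1 by blast
  then have e1: "(s, v1) \<in> E" "(v1, hd q) \<in> E"
    unfolding In_D_def SPGu_edges_def by auto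
  from vl1 have e2: "(last q, vl1) \<in> E" "(vl1, t) \<in> E"
    unfolding Out_A_def SPGu_edges_def by auto
  let ?P = "[s, v1] @ q @ [vl1, t]"
  have "is_path E (q @ [vl1, t])" using q(1) qne e2
    by (simp add: is_path_append is_path_Cons2)
  then have ip: "is_path E ?P" using qne e1
    by (cases q) (auto simp add: is_path_Cons2)
  have sp: "simple_path E s t ?P" using ip d by (simp add: simple_path_def)
  have pl: "plen ?P \<le> k" using l assms(3) by (simp add: plen_def)
  have "(u, v) \<in> path_edges ?P" using q(3) qne
    using path_edges_append[of "[s, v1] @ q" "[vl1, t]"] path_edges_append[of "[s, v1]" q] by auto
  then show "(u, v) \<in> SPG_edges E k s t"
    unfolding SPG_edges_def using sp pl by blast
next
  assume "(u, v) \<in> SPG_edges E k s t"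
  then obtain p where sp: "simple_path E s t p" and pl: "plen p \<le> k" and uv: "(u, v) \<in> path_edges p"
    unfolding SPG_edges_def by blast
  from path_edges_split[OF uv] obtain pre post where pp: "p = pre @ post" "pre \<noteq> []" "post \<noteq> []"
    "last pre = u" "hd post = v" by blast
  from assms(5) have nd: "\<not> definite_edge E k s t u v" and uvE: "(u, v) \<in> E"
    unfolding undetermined_edge_def SPGu_edges_def by auto
  from sp pp have ip: "is_path E pre" "is_path E post"
    and h: "hd pre = s" "last post = t" and d: "distinct pre" "distinct post" "set pre \<inter> set post = {}"
    by (auto simp: simple_path_def is_path_append)
  have tn: "t \<notin> set pre" using h d pp by (metis disjoint_iff last_in_set)
  have sn: "s \<notin> set post" using h d pp by (metis disjoint_iff hd_in_set)
  have lenp: "length pre + length post \<le> Suc k" using pl pp by (simp add: plen_def)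
  have pre3: "length pre \<ge> 3"
  proof (rule ccontr)
    assume "\<not> 3 \<le> length pre"
    then have "length pre = 1 \<or> length pre = 2" using pp(2) proof -
      have "length pre > 0" using pp(2) by simp
      then show ?thesis using \<open>\<not> 3 \<le> length pre\<close> by linarith
    qed
    then show False
    proof
      assume "length pre = 1"
      then have "u = s" using h pp by (cases pre) auto
      have "simple_path E v t post" using ip d h pp by (simp add: simple_path_def)
      moreover have "plen post \<le> k - 1" using lenp \<open>length pre = 1\<close> by (simp add: plen_def)
      ultimately have "EVb_ex E s t (k - 1) v" using EVb_lemma sn by metis
      then show False using nd uvE \<open>u = s\<close> unfolding definite_edge_def by blast
    next
      assume "length pre = 2"
      then obtain a where pa: "pre = [s, a]" using h by (cases pre rule: list.exhaust; cases "tl pre") auto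
      then have ua: "u = a" using pp by simp
      have "simple_path E s u [s, a]" using ip pa d ua by (simp add: simple_path_def)
      then have f: "EVf_ex E s t 1 u" using EVf_lemma(1)[of E s u "[s,a]" 1 t] tn pa by (simp add: plen_def)
      have bp: "simple_path E v t post" using ip d h pp by (simp add: simple_path_def)
      have "plen post \<le> k - 2" using lenp \<open>length pre = 2\<close> by (simp add: plen_def)
      note B = EVb_lemma[OF bp this sn]
      have "u \<notin> set post" using d pa ua by auto
      then have "u \<notin> EVb E s t (k - 2) v" using B(2) by blast
      then show False using nd uvE f B(1) unfolding definite_edge_def by blast
    qed
  qed
  have post3: "length post \<ge> 3"
  proof (rule ccontr)
    assume "\<not> 3 \<le> length post"
    then have "length post = 1 \<or> length post = 2" using pp(3) proof -
      have "length post > 0" using pp(3) by simp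
      then show ?thesis using \<open>\<not> 3 \<le> length post\<close> by linarith
    qed
    then show False
    proof
      assume "length post = 1"
      then have "v = t" using h pp by (cases post) auto
      have "simple_path E s u pre" using ip d h pp by (simp add: simple_path_def)
      moreover have "plen pre \<le> k - 1" using lenp \<open>length post = 1\<close> by (simp add: plen_def)
      ultimately have "EVf_ex E s t (k - 1) u" using EVf_lemma tn by metis
      then show False using nd uvE \<open>v = t\<close> unfolding definite_edge_def by blast
    next
      assume "length post = 2"
      then obtain a where pa: "post = [v, a]" using pp(5) by (cases post rule: list.exhaust; cases "tl post") auto
      then have at: "a = t" using h by simp
      have "simple_path E v t [v, a]" using ip pa d at by (simp add: simple_path_def)
      then have f: "EVb_ex E s t 1 v" using EVb_lemma(1)[of E v t "[v,a]" 1 s] sn pa by (simp add: plen_def)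
      have bp: "simple_path E s u pre" using ip d h pp by (simp add: simple_path_def)
      have "plen pre \<le> k - 2" using lenp \<open>length post = 2\<close> by (simp add: plen_def)
      note B = EVf_lemma[OF bp this tn]
      have "v \<notin> set pre" using d pa by auto
      then have "v \<notin> EVf E s t (k - 2) u" using B(2) by blast
      then show False using nd uvE f B(1) unfolding definite_edge_def by blast
    qed
  qed
  obtain a pre' where pre': "pre = s # a # pre'" "pre' \<noteq> []" using pre3 h
    by (cases pre rule: list.exhaust; cases "tl pre"; cases "tl (tl pre)") auto
  obtain post' b where post': "post = post' @ [b, t]" "post' \<noteq> []"
  proof -
    obtain r c where rc: "post = r @ [c]" using pp(3) by (cases post rule: rev_exhaust) auto
    then have c: "c = t" using h by simp
    have "r \<noteq> []" using rc post3 by auto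
    then obtain r' b where "r = r' @ [b]" by (cases r rule: rev_exhaust) auto
    moreover have "r' \<noteq> []" using calculation rc post3 by auto
    ultimately show ?thesis using that rc c by simp
  qed
  define q where "q = pre' @ post'"
  have pq: "p = s # a # q @ [b, t]" using pp pre' post' q_def by simp
  have qne: "q \<noteq> []" using q_def pre' by simp
  have dp: "distinct (s # a # q @ [b, t])" using sp pq by (simp add: simple_path_def)
  have ipq: "is_path E (s # a # q @ [b, t])" using sp pq by (simp add: simple_path_def)
  obtain q0 qr where q0: "q = q0 # qr" using qne by (cases q) auto
  have ipq2: "is_path E (q @ [b, t])" "(s, a) \<in> E" "(a, hd q) \<in> E" using ipq unfolding q0
    by (simp_all add: is_path_Cons2)
  then have iq: "is_path E q" "(last q, b) \<in> E" "(b, t) \<in> E"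
    using qne by (auto simp: is_path_append is_path_Cons2)
  have uvq: "(u, v) \<in> path_edges q" using q_def pre' post' pp by (simp add: path_edges_append)
  have spq: "simple_path E s t (s # a # q @ [b, t])" using sp pq by simp
  have plq: "plen (s # a # q @ [b, t]) \<le> k" using pl pq by simp
  have S1: "(s, a) \<in> SPGu_edges E k s t"
    using spgu_split[of E s t "[s]" "a # q @ [b, t]" k] spq plq by simp
  have S2: "(a, hd q) \<in> SPGu_edges E k s t"
    using spgu_split[of E s t "[s, a]" "q @ [b, t]" k] spq plq qne by (simp add: hd_append)
  have S3: "(last q, b) \<in> SPGu_edges E k s t"
    using spgu_split[of E s t "s # a # q" "[b, t]" k] spq plq qne by simp
  have S4: "(b, t) \<in> SPGu_edges E k s t"
    using spgu_split[of E s t "s # a # q @ [b]" "[t]" k] spq plq qne by simp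
  have aIn: "a \<in> In_D E k s t (hd q)"
    unfolding In_D_def using S1 S2 ipq2 dp qne by (auto simp: hd_in_set[OF qne] dest: hd_in_set)
  have hdD: "hd q \<in> Dep E k s t" using aIn unfolding Dep_def by blast
  have bOut: "b \<in> Out_A E k s t (last q)"
    unfolding Out_A_def using S3 S4 iq dp qne by (auto dest: last_in_set)
  have lastA: "last q \<in> Arr E k s t" using bOut unfolding Arr_def by blast
  have lq: "length q + 3 \<le> k" using pl pq by (simp add: plen_def)
  have "\<exists>v1 \<in> InHat (hd q). distinct ([s, v1] @ q @ [b, t])"
  proof (cases "card (In_D E k s t (hd q)) > k - 2")
    case True
    with assms(4)[OF hdD] have sub: "InHat (hd q) \<subseteq> In_D E k s t (hd q)"
      and c: "card (InHat (hd q)) = k - 2" by auto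
    have fin: "finite (InHat (hd q))" using c assms(3) by (intro card_ge_0_finite) simp
    have "\<not> InHat (hd q) \<subseteq> insert b (set (tl q))"
    proof
      assume "InHat (hd q) \<subseteq> insert b (set (tl q))"
      then have "card (InHat (hd q)) \<le> card (insert b (set (tl q)))" by (simp add: card_mono)
      also have "\<dots> \<le> Suc (length (tl q))" 
        using card_length[of "tl q"] by (simp add: card_insert_if)
      finally show False using c lq qne assms(3) by (cases q) auto
    qed
    then obtain x where x: "x \<in> InHat (hd q)" "x \<notin> insert b (set (tl q))" by blast
    then have "x \<in> In_D E k s t (hd q)" using sub by blast
    then have "x \<noteq> s" "x \<noteq> t" "x \<noteq> hd q" unfolding In_D_def by auto
    then have "distinct ([s, x] @ q @ [b, t])" using dp x qne by (cases q) auto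
    then show ?thesis using x by blast
  next
    case False
    with assms(4)[OF hdD] have "InHat (hd q) = In_D E k s t (hd q)" by auto
    then show ?thesis using aIn dp by auto
  qed
  then show "\<exists>l q. 4 \<le> l \<and> length q + 3 = l \<and> l - 4 \<le> k - 4 \<and>
       is_path E q \<and> distinct q \<and> (u, v) \<in> path_edges q \<and>
       hd q \<in> Dep E k s t \<and> last q \<in> Arr E k s t \<and>
       (\<exists>v1 \<in> InHat (hd q). \<exists>vl1 \<in> Out_A E k s t (last q).
          distinct ([s, v1] @ q @ [vl1, t]))"
    using iq dp uvq hdD lastA bOut lq qne
    by (intro exI[of _ "length q + 3"] exI[of _ q]) (auto simp: Suc_le_eq)
qed

end
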